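(* Every bipartite graph $G$ is strongly $\Delta(G)$-edge-orientable.
   Context: An orientation of a graph $H$ is any digraph obtained by replacing each edge $uv$ with the arc $(u,v)$, with the arc $(v,u)$, or with both arcs. A kernel of a digraph $D$ is an independent set $S$ such that every vertex of $D-S$ has an out-neighbor in $S$. $D$ is kernel-perfect if every induced subdigraph of $D$ has a kernel. For $f:V(H)\to\mathbb{N}$, an orientation $D$ of $H$ is $f$-kernel-perfect if it is kernel-perfect and $f(v)\ge 1+d^+_D(v)$ for all $v$. For $f:E(G)\to\mathbb{N}$, $G$ is $f$-edge-orientable if its line graph $L(G)$ admits an $f$-kernel-perfect orientation. For $v\in V(G)$, define $f_{k,v}:E(G)\to\mathbb{N}$ by $f_{k,v}(e)=d_G(v)$ if $e$ is incident to $v$, and $f_{k,v}(e)=k$ otherwise. $G$ is strongly $k$-edge-orientable if $G$ is $f_{k,v}$-edge-orientable for every $v\in V(G)$. *)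

theory Defs
  imports Main
begin

definition graph :: "'a set \<Rightarrow> 'a set set \<Rightarrow> bool" where
  "graph V E \<longleftrightarrow> finite V \<and> (\<forall>e\<in>E. e \<subseteq> V \<and> card e = 2)"

definition bipartite :: "'a set \<Rightarrow> 'a set set \<Rightarrow> bool" where
  "bipartite V E \<longleftrightarrow> (\<exists>A \<subseteq> V. \<forall>e\<in>E. card (e \<inter> A) = 1 \<and> card (e \<inter> (V - A)) = 1)"

definition degree :: "'a set set \<Rightarrow> 'a \<Rightarrow> nat" where
  "degree E v = card {e \<in> E. v \<in> e}"

definition max_degree :: "'a set \<Rightarrow> 'a set set \<Rightarrow> nat" where
  "max_degree V E = Max (insert 0 (degree E ` V))"

definition line_adj :: "'a set set \<Rightarrow> 'a set \<Rightarrow> 'a set \<Rightarrow> bool" where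
  "line_adj E e f \<longleftrightarrow> e \<in> E \<and> f \<in> E \<and> e \<noteq> f \<and> e \<inter> f \<noteq> {}"

definition orientation :: "'b set \<Rightarrow> ('b \<Rightarrow> 'b \<Rightarrow> bool) \<Rightarrow> ('b \<times> 'b) set \<Rightarrow> bool" where
  "orientation W adj D \<longleftrightarrow>
     (\<forall>(u,v)\<in>D. u \<in> W \<and> v \<in> W \<and> adj u v) \<and>
     (\<forall>u\<in>W. \<forall>v\<in>W. adj u v \<longrightarrow> (u,v) \<in> D \<or> (v,u) \<in> D)"

definition kernel_of :: "('b \<times> 'b) set \<Rightarrow> 'b set \<Rightarrow> 'b set \<Rightarrow> bool" where
  "kernel_of D X S \<longleftrightarrow> S \<subseteq> X \<and> (\<forall>u\<in>S. \<forall>v\<in>S. (u,v) \<notin> D) \<and>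
     (\<forall>v\<in>X - S. \<exists>s\<in>S. (v,s) \<in> D)"

definition kernel_perfect :: "'b set \<Rightarrow> ('b \<times> 'b) set \<Rightarrow> bool" where
  "kernel_perfect W D \<longleftrightarrow> (\<forall>X \<subseteq> W. \<exists>S. kernel_of D X S)"

definition out_degree :: "('b \<times> 'b) set \<Rightarrow> 'b \<Rightarrow> nat" where
  "out_degree D v = card {u. (v,u) \<in> D}"

definition f_kernel_perfect_orientation ::
  "'b set \<Rightarrow> ('b \<Rightarrow> 'b \<Rightarrow> bool) \<Rightarrow> ('b \<Rightarrow> nat) \<Rightarrow> ('b \<times> 'b) set \<Rightarrow> bool" where
  "f_kernel_perfect_orientation W adj f D \<longleftrightarrow>
     orientation W adj D \<and> kernel_perfect W D \<and> (\<forall>v\<in>W. f v \<ge> 1 + out_degree D v)"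

definition f_edge_orientable :: "'a set set \<Rightarrow> ('a set \<Rightarrow> nat) \<Rightarrow> bool" where
  "f_edge_orientable E f \<longleftrightarrow> (\<exists>D. f_kernel_perfect_orientation E (line_adj E) f D)"

definition f_kv :: "'a set set \<Rightarrow> nat \<Rightarrow> 'a \<Rightarrow> 'a set \<Rightarrow> nat" where
  "f_kv E k v e = (if v \<in> e then degree E v else k)"

definition strongly_edge_orientable :: "'a set \<Rightarrow> 'a set set \<Rightarrow> nat \<Rightarrow> bool" where
  "strongly_edge_orientable V E k \<longleftrightarrow> (\<forall>v\<in>V. f_edge_orientable E (f_kv E k v))"

end

theory Submission
  imports Defs
begin

definition bip :: "'a set \<Rightarrow> 'a set set \<Rightarrow> bool" where
  "bip A E \<longleftrightarrow> (\<forall>e\<in>E. \<exists>p q. e = {p,q} \<and> p \<in> A \<and> q \<notin> A)"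

definition proper :: "'a set set \<Rightarrow> ('a set \<Rightarrow> nat) \<Rightarrow> bool" where
  "proper E c \<longleftrightarrow> (\<forall>e\<in>E. \<forall>f\<in>E. e \<noteq> f \<longrightarrow> e \<inter> f \<noteq> {} \<longrightarrow> c e \<noteq> c f)"

inductive_set walk :: "'a set set \<Rightarrow> ('a set \<Rightarrow> nat) \<Rightarrow> nat \<Rightarrow> nat \<Rightarrow> 'a \<Rightarrow> ('a \<times> nat) set"
  for F c \<alpha> \<beta> b where
  wb: "{b,x} \<in> F \<Longrightarrow> c {b,x} = \<alpha> \<Longrightarrow> (x,\<alpha>) \<in> walk F c \<alpha> \<beta> b"
| wa: "(x,\<alpha>) \<in> walk F c \<alpha> \<beta> b \<Longrightarrow> {x,y} \<in> F \<Longrightarrow> c {x,y} = \<beta> \<Longrightarrow> (y,\<beta>) \<in> walk F c \<alpha> \<beta> b"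
| wc: "(x,\<beta>) \<in> walk F c \<alpha> \<beta> b \<Longrightarrow> {x,y} \<in> F \<Longrightarrow> c {x,y} = \<alpha> \<Longrightarrow> (y,\<alpha>) \<in> walk F c \<alpha> \<beta> b"

lemma edge_side: "bip A F \<Longrightarrow> {x,y} \<in> F \<Longrightarrow> (x \<in> A \<longleftrightarrow> y \<notin> A)"
  unfolding bip_def by (fastforce simp: doubleton_eq_iff)

lemma edge_neq: "bip A F \<Longrightarrow> {x,y} \<in> F \<Longrightarrow> x \<noteq> y"
  using edge_side by fastforce

lemma proper_uniq: "proper F c \<Longrightarrow> f \<in> F \<Longrightarrow> g \<in> F \<Longrightarrow> x \<in> f \<Longrightarrow> x \<in> g \<Longrightarrow> c f = c g \<Longrightarrow> f = g"
  unfolding proper_def by blast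

lemma walk_parity:
  assumes "bip A F" "b \<notin> A" "(x,\<gamma>) \<in> walk F c \<alpha> \<beta> b"
  shows "(x \<in> A \<and> \<gamma> = \<alpha>) \<or> (x \<notin> A \<and> \<gamma> = \<beta>)"
  using assms(3)
proof (induction x \<gamma> rule: walk.induct)
  case (wb x) then show ?case using edge_side[OF assms(1)] assms(2) by blast
next
  case (wa x y) then show ?case using edge_side[OF assms(1)] by blast
next
  case (wc x y) then show ?case using edge_side[OF assms(1)] by blast
qed

lemma walk_alpha_edge:
  assumes "(x,\<alpha>) \<in> walk F c \<alpha> \<beta> b" "\<alpha> \<noteq> \<beta>"
  shows "\<exists>f\<in>F. x \<in> f \<and> c f = \<alpha>"
  using assms by (cases rule: walk.cases) auto

lemma walk_closure:
  assumes bp: "bip A F" and pr: "proper F c" and nb: "\<forall>f\<in>F. b \<in> f \<longrightarrow> c f \<noteq> \<beta>"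
    and ab: "\<alpha> \<noteq> \<beta>"
    and e: "{x,y} \<in> F" "c {x,y} \<in> {\<alpha>,\<beta>}" and xW: "x \<in> insert b (fst ` walk F c \<alpha> \<beta> b)"
  shows "y \<in> insert b (fst ` walk F c \<alpha> \<beta> b)"
proof -
  have xy: "x \<noteq> y" using edge_neq[OF bp e(1)] .
  have sw: "\<And>z. {z,x} \<in> F \<Longrightarrow> c {z,x} = c {x,y} \<Longrightarrow> y = z"
  proof -
    fix z assume "{z,x} \<in> F" "c {z,x} = c {x,y}"
    then have "{x,y} = {z,x}" using proper_uniq[OF pr e(1), of "{z,x}" x] by auto
    then show "y = z" using xy by (auto simp: doubleton_eq_iff)
  qed
  consider "x = b" | \<gamma> where "(x,\<gamma>) \<in> walk F c \<alpha> \<beta> b" using xW by auto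
  then show ?thesis
  proof cases
    case 1
    then have "c {x,y} = \<alpha>" using nb e by auto
    then have "(y,\<alpha>) \<in> walk F c \<alpha> \<beta> b" using wb[of b y F c \<alpha> \<beta>] e 1 by auto
    then show ?thesis by force
  next
    case 2
    then show ?thesis
    proof (cases rule: walk.cases)
      case wb
      show ?thesis
      proof (cases "c {x,y} = \<alpha>")
        case True
        then have "y = b" using sw[of b] wb by auto
        then show ?thesis by auto
      next
        case False
        then have "c {x,y} = \<beta>" using e by auto
        then have "(y,\<beta>) \<in> walk F c \<alpha> \<beta> b" using walk.wa[where x=x and y=y] 2 wb e by auto
        then show ?thesis by force
      qed
    next
      case (wa z)
      show ?thesis
      proof (cases "c {x,y} = \<beta>")
        case True
        then have "y = z" using sw[of z] wa by auto
        then show ?thesis using wa by force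
      next
        case False
        then have "c {x,y} = \<alpha>" using e by auto
        then have "(y,\<alpha>) \<in> walk F c \<alpha> \<beta> b" using walk.wc[where x=x and y=y] 2 wa e by auto
        then show ?thesis by force
      qed
    next
      case (wc z)
      show ?thesis
      proof (cases "c {x,y} = \<alpha>")
        case True
        then have "y = z" using sw[of z] wc by auto
        then show ?thesis using wc by force
      next
        case False
        then have "c {x,y} = \<beta>" using e by auto
        then have "(y,\<beta>) \<in> walk F c \<alpha> \<beta> b" using walk.wa[where x=x and y=y] 2 wc e by auto
        then show ?thesis by force
      qed
    qed
  qed
qed

lemma kempe:
  assumes bp: "bip A F" and pr: "proper F c" and rng: "\<forall>f\<in>F. c f < k"
    and aA: "a \<in> A" and bA: "b \<notin> A" and ak: "\<alpha> < k" and bk: "\<beta> < k"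
    and na: "\<forall>f\<in>F. a \<in> f \<longrightarrow> c f \<noteq> \<alpha>" and nb: "\<forall>f\<in>F. b \<in> f \<longrightarrow> c f \<noteq> \<beta>"
  shows "\<exists>c'. proper F c' \<and> (\<forall>f\<in>F. c' f < k) \<and> (\<forall>f\<in>F. a \<in> f \<longrightarrow> c' f \<noteq> \<alpha>)
           \<and> (\<forall>f\<in>F. b \<in> f \<longrightarrow> c' f \<noteq> \<alpha>)"
proof (cases "\<alpha> = \<beta>")
  case True
  then show ?thesis using pr rng na nb by blast
next
  case ab: False
  define W where "W = insert b (fst ` walk F c \<alpha> \<beta> b)"
  define sw where "sw = (\<lambda>\<gamma>::nat. if \<gamma> = \<alpha> then \<beta> else if \<gamma> = \<beta> then \<alpha> else \<gamma>)"
  define c' where "c' = (\<lambda>f. if (\<exists>x\<in>f. x \<in> W) \<and> c f \<in> {\<alpha>,\<beta>} then sw (c f) else c f)"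
  have edge: "\<And>f. f \<in> F \<Longrightarrow> \<exists>p q. f = {p,q} \<and> p \<in> A \<and> q \<notin> A" using bp unfolding bip_def by blast
  have clos: "\<And>x y. {x,y} \<in> F \<Longrightarrow> c {x,y} \<in> {\<alpha>,\<beta>} \<Longrightarrow> x \<in> W \<Longrightarrow> y \<in> W"
    using walk_closure[OF bp pr nb ab] unfolding W_def by blast
  have closf: "\<And>f x y. f \<in> F \<Longrightarrow> c f \<in> {\<alpha>,\<beta>} \<Longrightarrow> x \<in> f \<Longrightarrow> y \<in> f \<Longrightarrow> x \<in> W \<Longrightarrow> y \<in> W"
  proof -
    fix f x y assume h: "f \<in> F" "c f \<in> {\<alpha>,\<beta>}" "x \<in> f" "y \<in> f" "x \<in> W"
    obtain p q where f: "f = {p,q}" using edge[OF h(1)] by blast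
    show "y \<in> W"
    proof (cases "x = y")
      case True then show ?thesis using h by simp
    next
      case False
      then have "f = {x,y}" using f h(3,4) by auto
      then show ?thesis using clos h by auto
    qed
  qed
  have swinj: "\<And>u v. sw u = sw v \<Longrightarrow> u = v" unfolding sw_def by (auto split: if_splits)
  have swin: "\<And>u. u \<in> {\<alpha>,\<beta>} \<Longrightarrow> sw u \<in> {\<alpha>,\<beta>}" unfolding sw_def by auto
  have p1: "proper F c'"
    unfolding proper_def
  proof (intro ballI impI)
    fix e f assume h: "e \<in> F" "f \<in> F" "e \<noteq> f" "e \<inter> f \<noteq> {}"
    then obtain z where z: "z \<in> e" "z \<in> f" by blast
    have ne: "c e \<noteq> c f" using pr h unfolding proper_def by blast
    show "c' e \<noteq> c' f"
    proof (cases "(\<exists>x\<in>e. x \<in> W) \<and> c e \<in> {\<alpha>,\<beta>}")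
      case T1: True
      then have zW: "z \<in> W" using closf[OF h(1)] z by blast
      show ?thesis
      proof (cases "c f \<in> {\<alpha>,\<beta>}")
        case True
        then have "c' f = sw (c f)" "c' e = sw (c e)" using zW z T1 unfolding c'_def by auto
        then show ?thesis using ne swinj by metis
      next
        case False
        then have "c' f = c f" "c' e \<in> {\<alpha>,\<beta>}" using T1 swin unfolding c'_def by auto
        then show ?thesis using False by auto
      qed
    next
      case F1: False
      show ?thesis
      proof (cases "(\<exists>x\<in>f. x \<in> W) \<and> c f \<in> {\<alpha>,\<beta>}")
        case T2: True
        then have zW: "z \<in> W" using closf[OF h(2)] z by blast
        then have "c e \<notin> {\<alpha>,\<beta>}" using F1 z by auto
        then have "c' e = c e" "c' f \<in> {\<alpha>,\<beta>}" using T2 swin unfolding c'_def by auto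
        then show ?thesis using \<open>c e \<notin> {\<alpha>,\<beta>}\<close> by auto
      next
        case False
        then show ?thesis using F1 ne unfolding c'_def by auto
      qed
    qed
  qed
  have p2: "\<forall>f\<in>F. c' f < k" using rng ak bk unfolding c'_def sw_def by auto
  have aW: "a \<notin> W"
  proof
    assume "a \<in> W"
    moreover have "a \<noteq> b" using aA bA by auto
    ultimately obtain \<gamma> where g: "(a,\<gamma>) \<in> walk F c \<alpha> \<beta> b" unfolding W_def by auto
    then have "\<gamma> = \<alpha>" using walk_parity[OF bp bA g] aA by auto
    then have "\<exists>f\<in>F. a \<in> f \<and> c f = \<alpha>" using walk_alpha_edge[OF _ ab] g by simp
    then show False using na by blast
  qed
  have p3: "\<forall>f\<in>F. a \<in> f \<longrightarrow> c' f \<noteq> \<alpha>"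
  proof (intro ballI impI)
    fix f assume h: "f \<in> F" "a \<in> f"
    have "\<not> ((\<exists>x\<in>f. x \<in> W) \<and> c f \<in> {\<alpha>,\<beta>})"
    proof
      assume "(\<exists>x\<in>f. x \<in> W) \<and> c f \<in> {\<alpha>,\<beta>}"
      then obtain x where x: "x \<in> f" "x \<in> W" "c f \<in> {\<alpha>,\<beta>}" by blast
      show False using closf[OF h(1) x(3) x(1) h(2) x(2)] aW by blast
    qed
    then show "c' f \<noteq> \<alpha>" using na h unfolding c'_def by auto
  qed
  have p4: "\<forall>f\<in>F. b \<in> f \<longrightarrow> c' f \<noteq> \<alpha>"
  proof (intro ballI impI)
    fix f assume h: "f \<in> F" "b \<in> f"
    have "b \<in> W" unfolding W_def by simp
    then show "c' f \<noteq> \<alpha>" using nb h ab unfolding c'_def sw_def by auto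
  qed
  show ?thesis using p1 p2 p3 p4 by blast
qed

lemma degree_insert: "finite F \<Longrightarrow> e \<notin> F \<Longrightarrow> a \<in> e \<Longrightarrow> degree (insert e F) a = Suc (degree F a)"
proof -
  assume h: "finite F" "e \<notin> F" "a \<in> e"
  have "{f \<in> insert e F. a \<in> f} = insert e {f \<in> F. a \<in> f}" using h by auto
  then show ?thesis unfolding degree_def using h by simp
qed

lemma degree_mono: "finite G \<Longrightarrow> F \<subseteq> G \<Longrightarrow> degree F a \<le> degree G a"
  unfolding degree_def by (rule card_mono) auto

lemma free_color:
  assumes "finite F" "degree F a < k"
  shows "\<exists>\<alpha><k. \<forall>f\<in>F. a \<in> f \<longrightarrow> c f \<noteq> \<alpha>"
proof (rule ccontr)
  assume "\<not> ?thesis"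
  then have "{..<k} \<subseteq> c ` {f\<in>F. a \<in> f}" by blast
  then have "k \<le> card (c ` {f\<in>F. a \<in> f})" using assms(1) card_mono[of "c ` {f\<in>F. a \<in> f}" "{..<k}"] by auto
  also have "\<dots> \<le> degree F a" unfolding degree_def using assms(1) by (simp add: card_image_le)
  finally show False using assms(2) by simp
qed

lemma koenig:
  "finite E \<Longrightarrow> bip A E \<Longrightarrow> \<forall>x. degree E x \<le> k \<Longrightarrow> \<exists>c. proper E c \<and> (\<forall>e\<in>E. c e < k)"
proof (induction E rule: finite_induct)
  case empty
  then show ?case unfolding proper_def by auto
next
  case (insert e F)
  have bF: "bip A F" using insert.prems(1) unfolding bip_def by auto
  have dF: "\<forall>x. degree F x \<le> k" using insert.prems(2) degree_mono[of "insert e F" F] insert.hyps(1) by (meson finite_insert le_trans subset_insertI)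
  obtain c where c: "proper F c" "\<forall>f\<in>F. c f < k" using insert.IH[OF bF dF] by blast
  obtain a b where e: "e = {a,b}" "a \<in> A" "b \<notin> A" using insert.prems(1) unfolding bip_def by blast
  have da: "degree F a < k" using degree_insert[OF insert.hyps(1,2), of a] e insert.prems(2) by (metis Suc_le_lessD insertCI)
  have db: "degree F b < k" using degree_insert[OF insert.hyps(1,2), of b] e insert.prems(2) by (metis Suc_le_lessD insertCI)
  obtain \<alpha> where al: "\<alpha> < k" "\<forall>f\<in>F. a \<in> f \<longrightarrow> c f \<noteq> \<alpha>" using free_color[OF insert.hyps(1) da] by blast
  obtain \<beta> where be: "\<beta> < k" "\<forall>f\<in>F. b \<in> f \<longrightarrow> c f \<noteq> \<beta>" using free_color[OF insert.hyps(1) db] by blast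
  obtain c' where c': "proper F c'" "\<forall>f\<in>F. c' f < k" "\<forall>f\<in>F. a \<in> f \<longrightarrow> c' f \<noteq> \<alpha>"
      "\<forall>f\<in>F. b \<in> f \<longrightarrow> c' f \<noteq> \<alpha>"
    using kempe[OF bF c(1) c(2) e(2) e(3) al(1) be(1) al(2) be(2)] by blast
  define c'' where "c'' = c'(e := \<alpha>)"
  have "proper (insert e F) c''"
    unfolding proper_def
  proof (intro ballI impI)
    fix f g assume h: "f \<in> insert e F" "g \<in> insert e F" "f \<noteq> g" "f \<inter> g \<noteq> {}"
    show "c'' f \<noteq> c'' g"
    proof (cases "f = e")
      case True
      then have "g \<in> F" "a \<in> g \<or> b \<in> g" using h e by auto
      then show ?thesis using True c' insert.hyps(2) unfolding c''_def by auto
    next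
      case False
      show ?thesis
      proof (cases "g = e")
        case True
        then have "f \<in> F" "a \<in> f \<or> b \<in> f" using h e False by auto
        then show ?thesis using True c' insert.hyps(2) unfolding c''_def by auto
      next
        case False
        then have "f \<in> F" "g \<in> F" using h \<open>f \<noteq> e\<close> by auto
        then show ?thesis using c'(1) h False \<open>f \<noteq> e\<close> unfolding c''_def proper_def by auto
      qed
    qed
  qed
  moreover have "\<forall>f\<in>insert e F. c'' f < k" using c'(2) al(1) unfolding c''_def by auto
  ultimately show ?case by blast
qed

definition galD :: "'a set \<Rightarrow> 'a set set \<Rightarrow> ('a set \<Rightarrow> nat) \<Rightarrow> ('a set \<times> 'a set) set" where
  "galD A E c = {(e,f). e \<in> E \<and> f \<in> E \<and> e \<noteq> f \<and>
      (\<exists>z\<in>e \<inter> f. (z \<in> A \<and> c f < c e) \<or> (z \<notin> A \<and> c e < c f))}"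

lemma bip_uA: "bip A E \<Longrightarrow> e \<in> E \<Longrightarrow> z \<in> e \<Longrightarrow> z' \<in> e \<Longrightarrow> z \<in> A \<Longrightarrow> z' \<in> A \<Longrightarrow> z = z'"
  unfolding bip_def by fastforce

lemma bip_uB: "bip A E \<Longrightarrow> e \<in> E \<Longrightarrow> z \<in> e \<Longrightarrow> z' \<in> e \<Longrightarrow> z \<notin> A \<Longrightarrow> z' \<notin> A \<Longrightarrow> z = z'"
  unfolding bip_def by fastforce

lemma bip_exA: "bip A E \<Longrightarrow> e \<in> E \<Longrightarrow> \<exists>x\<in>e. x \<in> A"
  unfolding bip_def by fastforce

lemma kernel_exists:
  assumes bp: "bip A E" and pr: "proper E c"
  shows "finite X \<Longrightarrow> X \<subseteq> E \<Longrightarrow> \<exists>S. kernel_of (galD A E c) X S"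
proof (induction "card X" arbitrary: X rule: less_induct)
  case less
  define F where "F = {f\<in>X. \<exists>x\<in>A. x \<in> f \<and> (\<forall>g\<in>X. x \<in> g \<longrightarrow> g \<noteq> f \<longrightarrow> c f < c g)}"
  have minex: "\<exists>f\<in>X. x \<in> f \<and> (\<forall>g\<in>X. x \<in> g \<longrightarrow> g \<noteq> f \<longrightarrow> c f < c g)"
    if ex: "e \<in> X" "x \<in> e" for e x
  proof -
    define M where "M = {g\<in>X. x \<in> g}"
    have fM: "finite M" using less.prems(1) unfolding M_def by simp
    have neM: "M \<noteq> {}" using ex unfolding M_def by blast
    have "Min (c ` M) \<in> c ` M" using fM neM by simp
    then obtain f where f: "f \<in> M" "c f = Min (c ` M)" by auto
    have "\<forall>g\<in>X. x \<in> g \<longrightarrow> g \<noteq> f \<longrightarrow> c f < c g"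
    proof (intro ballI impI)
      fix g assume g: "g \<in> X" "x \<in> g" "g \<noteq> f"
      then have "g \<in> M" unfolding M_def by simp
      then have "c f \<le> c g" using f fM by simp
      moreover have "c g \<noteq> c f" using pr g f less.prems(2) unfolding proper_def M_def by blast
      ultimately show "c f < c g" by simp
    qed
    then show ?thesis using f unfolding M_def by blast
  qed
  show ?case
  proof (cases "\<exists>u\<in>F. \<exists>v\<in>F. (u,v) \<in> galD A E c")
    case False
    have "kernel_of (galD A E c) X F"
      unfolding kernel_of_def
    proof (intro conjI ballI)
      show "F \<subseteq> X" unfolding F_def by blast
      show "\<And>u v. u \<in> F \<Longrightarrow> v \<in> F \<Longrightarrow> (u,v) \<notin> galD A E c" using False by blast
      fix e assume e: "e \<in> X - F"
      then have eE: "e \<in> E" using less.prems(2) by blast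
      obtain x where x: "x \<in> e" "x \<in> A" using bip_exA[OF bp eE] by blast
      obtain f where f: "f \<in> X" "x \<in> f" "\<forall>g\<in>X. x \<in> g \<longrightarrow> g \<noteq> f \<longrightarrow> c f < c g"
        using minex[of e x] e x by blast
      have fF: "f \<in> F" unfolding F_def using f x by blast
      have "f \<noteq> e" using fF e by blast
      then have "c f < c e" using f e x by blast
      then have "(e,f) \<in> galD A E c" unfolding galD_def using eE f less.prems(2) x \<open>f \<noteq> e\<close> by blast
      then show "\<exists>s\<in>F. (e,s) \<in> galD A E c" using fF by blast
    qed
    then show ?thesis by blast
  next
    case True
    then obtain u v where uv: "u \<in> F" "v \<in> F" "(u,v) \<in> galD A E c" by blast
    obtain x1 where x1: "u \<in> X" "x1 \<in> A" "x1 \<in> u" "\<forall>g\<in>X. x1 \<in> g \<longrightarrow> g \<noteq> u \<longrightarrow> c u < c g"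
      using uv(1) unfolding F_def by blast
    obtain x2 where x2: "v \<in> X" "x2 \<in> A" "x2 \<in> v" "\<forall>g\<in>X. x2 \<in> g \<longrightarrow> g \<noteq> v \<longrightarrow> c v < c g"
      using uv(2) unfolding F_def by blast
    have uE: "u \<in> E" and vE: "v \<in> E" and uvne: "u \<noteq> v" using uv(3) unfolding galD_def by auto
    obtain z where z: "z \<in> u" "z \<in> v" "(z \<in> A \<and> c v < c u) \<or> (z \<notin> A \<and> c u < c v)"
      using uv(3) unfolding galD_def by blast
    have zB: "z \<notin> A \<and> c u < c v"
    proof (rule ccontr)
      assume "\<not> (z \<notin> A \<and> c u < c v)"
      then have zA: "z \<in> A" "c v < c u" using z by auto
      then have "z = x1" using bip_uA[OF bp uE z(1) x1(3)] x1(2) by blast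
      then have "c u < c v" using x1(4) x2(1) z(2) uvne by blast
      then show False using zA by simp
    qed
    define X' where "X' = X - {u}"
    have "card X' < card X" unfolding X'_def using less.prems(1) x1(1) by (meson card_Diff1_less)
    moreover have "finite X'" "X' \<subseteq> E" unfolding X'_def using less.prems by auto
    ultimately obtain S where S: "kernel_of (galD A E c) X' S" using less.hyps by blast
    have "kernel_of (galD A E c) X S"
      unfolding kernel_of_def
    proof (intro conjI ballI)
      show "S \<subseteq> X" using S unfolding kernel_of_def X'_def by blast
      show "\<And>p q. p \<in> S \<Longrightarrow> q \<in> S \<Longrightarrow> (p,q) \<notin> galD A E c" using S unfolding kernel_of_def by blast
      fix e assume e: "e \<in> X - S"
      show "\<exists>s\<in>S. (e,s) \<in> galD A E c"
      proof (cases "e = u")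
        case False
        then have "e \<in> X' - S" using e unfolding X'_def by blast
        then show ?thesis using S unfolding kernel_of_def by blast
      next
        case eu: True
        show ?thesis
        proof (cases "v \<in> S")
          case True
          then show ?thesis using uv(3) eu by blast
        next
          case False
          then have "v \<in> X' - S" using x2(1) uvne unfolding X'_def by blast
          then obtain s where s: "s \<in> S" "(v,s) \<in> galD A E c" using S unfolding kernel_of_def by blast
          have sX': "s \<in> X'" using s(1) S unfolding kernel_of_def by blast
          then have sX: "s \<in> X" and su: "s \<noteq> u" unfolding X'_def by auto
          have sE: "s \<in> E" using sX less.prems(2) by blast
          have svne: "s \<noteq> v" using s(2) unfolding galD_def by auto
          obtain z' where z': "z' \<in> v" "z' \<in> s" "(z' \<in> A \<and> c s < c v) \<or> (z' \<notin> A \<and> c v < c s)"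
            using s(2) unfolding galD_def by blast
          have z'B: "z' \<notin> A \<and> c v < c s"
          proof (rule ccontr)
            assume "\<not> (z' \<notin> A \<and> c v < c s)"
            then have zA: "z' \<in> A" "c s < c v" using z' by auto
            then have "z' = x2" using bip_uA[OF bp vE z'(1) x2(3)] x2(2) by blast
            then have "c v < c s" using x2(4) sX z'(2) svne by blast
            then show False using zA by simp
          qed
          have "z' = z" using bip_uB[OF bp vE z'(1) z(2)] z'B zB by blast
          then have "(u,s) \<in> galD A E c" unfolding galD_def using uE sE su z(1) z'(2) zB z'B by auto
          then show ?thesis using s(1) eu by blast
        qed
      qed
    qed
    then show ?thesis by blast
  qed
qed

lemma orient:
  assumes fin: "finite E" and bp: "bip A E" and pr: "proper E c" and rng: "\<forall>e\<in>E. c e < k"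
    and vA: "v \<in> A" and top: "\<forall>f\<in>E. v \<in> f \<longrightarrow> k - degree E v \<le> c f"
  shows "f_kernel_perfect_orientation E (line_adj E) (f_kv E k v) (galD A E c)"
  unfolding f_kernel_perfect_orientation_def
proof (intro conjI)
  show "orientation E (line_adj E) (galD A E c)"
    unfolding orientation_def
  proof (intro conjI ballI impI)
    show "\<And>p. p \<in> galD A E c \<Longrightarrow> case p of (u,w) \<Rightarrow> u \<in> E \<and> w \<in> E \<and> line_adj E u w"
      unfolding galD_def line_adj_def by auto
    fix u w assume h: "u \<in> E" "w \<in> E" "line_adj E u w"
    then obtain z where z: "z \<in> u" "z \<in> w" unfolding line_adj_def by blast
    have ne: "u \<noteq> w" using h unfolding line_adj_def by blast
    have "c u \<noteq> c w" using pr h z ne unfolding proper_def by blast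
    then show "(u,w) \<in> galD A E c \<or> (w,u) \<in> galD A E c"
      unfolding galD_def using h(1,2) z ne by (cases "z \<in> A"; cases "c u < c w") auto
  qed
  show "kernel_perfect E (galD A E c)"
    unfolding kernel_perfect_def using kernel_exists[OF bp pr] fin finite_subset by blast
  show "\<forall>e\<in>E. 1 + out_degree (galD A E c) e \<le> f_kv E k v e"
  proof
    fix e assume eE: "e \<in> E"
    obtain x y where e: "e = {x,y}" "x \<in> A" "y \<notin> A" using bp eE unfolding bip_def by blast
    define d where "d = degree E v"
    define lo where "lo = (if v \<in> e then k - d else 0)"
    define L where "L = {f\<in>E. x \<in> f \<and> c f < c e}"
    define U where "U = {f\<in>E. y \<in> f \<and> c e < c f}"
    have sub: "{u. (e,u) \<in> galD A E c} \<subseteq> L \<union> U"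
    proof
      fix u assume "u \<in> {u. (e,u) \<in> galD A E c}"
      then have u: "u \<in> E" "(\<exists>z\<in>e \<inter> u. (z \<in> A \<and> c u < c e) \<or> (z \<notin> A \<and> c e < c u))"
        unfolding galD_def by auto
      then obtain z where z: "z \<in> e" "z \<in> u" "(z \<in> A \<and> c u < c e) \<or> (z \<notin> A \<and> c e < c u)" by blast
      then have "(z = x \<and> c u < c e) \<or> (z = y \<and> c e < c u)" using e by auto
      then show "u \<in> L \<union> U" unfolding L_def U_def using u z by auto
    qed
    have fL: "finite L" "finite U" unfolding L_def U_def using fin by auto
    have "out_degree (galD A E c) e \<le> card (L \<union> U)"
      unfolding out_degree_def by (rule card_mono) (use fL sub in auto)
    also have "\<dots> \<le> card L + card U" by (rule card_Un_le)
    finally have o1: "out_degree (galD A E c) e \<le> card L + card U" .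
    have injL: "inj_on c L" unfolding inj_on_def L_def using pr unfolding proper_def by blast
    have injU: "inj_on c U" unfolding inj_on_def U_def using pr unfolding proper_def by blast
    have ceL: "c e < k" using rng eE by blast
    have imL: "c ` L \<subseteq> {lo..<c e}"
    proof
      fix t assume "t \<in> c ` L"
      then obtain f where f: "f \<in> L" "t = c f" by blast
      have "lo \<le> c f"
      proof (cases "v \<in> e")
        case True
        then have "v = x" using bip_uA[OF bp eE] e vA by blast
        then show ?thesis using top f True unfolding lo_def d_def L_def by auto
      next
        case False then show ?thesis unfolding lo_def by simp
      qed
      then show "t \<in> {lo..<c e}" using f unfolding L_def by auto
    qed
    have imU: "c ` U \<subseteq> {Suc (c e)..<k}" unfolding U_def using rng by auto
    have cL: "card L \<le> c e - lo"
      using card_inj_on_le[OF injL imL] by simp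
    have cU: "card U \<le> k - Suc (c e)"
      using card_inj_on_le[OF injU imU] by simp
    show "1 + out_degree (galD A E c) e \<le> f_kv E k v e"
    proof (cases "v \<in> e")
      case True
      have "k - d \<le> c e" using top eE True unfolding d_def by blast
      then show ?thesis using True o1 cL cU ceL unfolding f_kv_def lo_def d_def[symmetric] by auto
    next
      case False
      then show ?thesis using o1 cL cU ceL unfolding f_kv_def lo_def by auto
    qed
  qed
qed

lemma perm_top:
  assumes "finite C" "C \<subseteq> {..<k}" "card C = d"
  shows "\<exists>\<pi>. inj_on \<pi> {..<k} \<and> \<pi> ` {..<k} \<subseteq> {..<k} \<and> (\<forall>x\<in>C. k - d \<le> \<pi> x)"
proof -
  have dk: "d \<le> k" using assms card_mono[of "{..<k}" C] by auto
  have c1: "card C = card {k-d..<k}" using assms dk by simp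
  have c2: "card ({..<k} - C) = card {..<k-d}" using assms by (simp add: card_Diff_subset)
  obtain g1 where g1: "bij_betw g1 C {k-d..<k}" using finite_same_card_bij[OF assms(1) _ c1] by auto
  obtain g2 where g2: "bij_betw g2 ({..<k} - C) {..<k-d}" using finite_same_card_bij[OF _ _ c2] by auto
  define \<pi> where "\<pi> = (\<lambda>x. if x \<in> C then g1 x else g2 x)"
  have i1: "\<And>x. x \<in> C \<Longrightarrow> \<pi> x \<in> {k-d..<k}" using g1 unfolding \<pi>_def bij_betw_def by auto
  have i2: "\<And>x. x \<in> {..<k} - C \<Longrightarrow> \<pi> x \<in> {..<k-d}" using g2 unfolding \<pi>_def bij_betw_def by auto
  have "inj_on \<pi> {..<k}"
  proof (rule inj_onI)
    fix x y assume h: "x \<in> {..<k}" "y \<in> {..<k}" "\<pi> x = \<pi> y"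
    show "x = y"
    proof (cases "x \<in> C"; cases "y \<in> C")
      assume "x \<in> C" "y \<in> C" then show ?thesis using h g1 unfolding \<pi>_def bij_betw_def inj_on_def by auto
    next
      assume "x \<in> C" "y \<notin> C" then show ?thesis using h i1[of x] i2[of y] by auto
    next
      assume "x \<notin> C" "y \<in> C" then show ?thesis using h i1[of y] i2[of x] by auto
    next
      assume "x \<notin> C" "y \<notin> C" then show ?thesis using h g2 unfolding \<pi>_def bij_betw_def inj_on_def by auto
    qed
  qed
  moreover have "\<pi> ` {..<k} \<subseteq> {..<k}" using i1 i2 by fastforce
  moreover have "\<forall>x\<in>C. k - d \<le> \<pi> x" using i1 by auto
  ultimately show ?thesis by blast
qed

lemma strong_one:
  assumes fin: "finite E" and bp: "bip A E" and vA: "v \<in> A" and deg: "\<forall>x. degree E x \<le> k"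
  shows "f_edge_orientable E (f_kv E k v)"
proof -
  obtain c0 where c0: "proper E c0" "\<forall>e\<in>E. c0 e < k" using koenig[OF fin bp deg] by blast
  define C where "C = c0 ` {f\<in>E. v \<in> f}"
  have injv: "inj_on c0 {f\<in>E. v \<in> f}" unfolding inj_on_def using c0(1) unfolding proper_def by blast
  have cC: "card C = degree E v" unfolding C_def degree_def using card_image[OF injv] .
  have fC: "finite C" unfolding C_def using fin by simp
  have sC: "C \<subseteq> {..<k}" unfolding C_def using c0(2) by auto
  obtain \<pi> where p: "inj_on \<pi> {..<k}" "\<pi> ` {..<k} \<subseteq> {..<k}" "\<forall>x\<in>C. k - degree E v \<le> \<pi> x"
    using perm_top[OF fC sC cC] by blast
  define c where "c = \<pi> \<circ> c0"
  have pr: "proper E c" unfolding proper_def c_def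
  proof (intro ballI impI)
    fix e f assume h: "e \<in> E" "f \<in> E" "e \<noteq> f" "e \<inter> f \<noteq> {}"
    then have "c0 e \<noteq> c0 f" using c0(1) unfolding proper_def by blast
    then show "(\<pi> \<circ> c0) e \<noteq> (\<pi> \<circ> c0) f" using p(1) c0(2) h unfolding inj_on_def by auto
  qed
  have rng: "\<forall>e\<in>E. c e < k" unfolding c_def using p(2) c0(2) by auto
  have top: "\<forall>f\<in>E. v \<in> f \<longrightarrow> k - degree E v \<le> c f" unfolding c_def C_def using p(3) C_def by auto
  show ?thesis unfolding f_edge_orientable_def using orient[OF fin bp pr rng vA top] by blast
qed

theorem mainTheorem13:
  fixes V :: "'a set" and E :: "'a set set"
  assumes "graph V E" and "bipartite V E"
  shows "strongly_edge_orientable V E (max_degree V E)"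
proof -
  have fV: "finite V" and eV: "\<forall>e\<in>E. e \<subseteq> V \<and> card e = 2" using assms(1) unfolding graph_def by auto
  have fE: "finite E"
  proof (rule finite_subset)
    show "E \<subseteq> Pow V" using eV by auto
    show "finite (Pow V)" using fV by simp
  qed
  obtain A where A: "A \<subseteq> V" "\<forall>e\<in>E. card (e \<inter> A) = 1 \<and> card (e \<inter> (V - A)) = 1"
    using assms(2) unfolding bipartite_def by blast
  have bA: "bip A E" unfolding bip_def
  proof
    fix e assume e: "e \<in> E"
    obtain p where p: "e \<inter> A = {p}" using A(2) e by (meson card_1_singletonE)
    obtain q where q: "e \<inter> (V - A) = {q}" using A(2) e by (meson card_1_singletonE)
    have "e = (e \<inter> A) \<union> (e \<inter> (V - A))" using eV e by blast
    then have "e = {p,q}" using p q by auto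
    moreover have "p \<in> A" "q \<notin> A" using p q by auto
    ultimately show "\<exists>p q. e = {p,q} \<and> p \<in> A \<and> q \<notin> A" by blast
  qed
  have bB: "bip (V - A) E" unfolding bip_def
  proof
    fix e assume e: "e \<in> E"
    obtain p q where "e = {p,q}" "p \<in> A" "q \<notin> A" using bA e unfolding bip_def by blast
    moreover then have "q \<in> V" using eV e by auto
    ultimately show "\<exists>p q. e = {p,q} \<and> p \<in> V - A \<and> q \<notin> V - A" by blast
  qed
  have deg: "\<forall>x. degree E x \<le> max_degree V E"
  proof
    fix x show "degree E x \<le> max_degree V E"
    proof (cases "x \<in> V")
      case True
      then show ?thesis unfolding max_degree_def using fV by (simp add: Max_ge_iff)
    next
      case False
      then have "{e\<in>E. x \<in> e} = {}" using eV by auto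
      then show ?thesis unfolding degree_def by (metis card.empty le0)
    qed
  qed
  show ?thesis unfolding strongly_edge_orientable_def
  proof
    fix v assume v: "v \<in> V"
    show "f_edge_orientable E (f_kv E (max_degree V E) v)"
    proof (cases "v \<in> A")
      case True
      show ?thesis using strong_one[OF fE bA True deg] .
    next
      case False
      then have "v \<in> V - A" using v by blast
      then show ?thesis using strong_one[OF fE bB _ deg] by blast
    qed
  qed
qed

end
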